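(* Let $C\subseteq\mathbb{F}_2^n$ be a binary linear $[n,k,d]$ code with $\mathbf{1}_n\in C$, whose dual $C^\perp$ has minimum distance $d^\perp$, let $t$ be a positive integer with $$d^\perp-t=\#\{u \mid C_u\neq\emptyset,\ 0<u\le n-t\}=3,$$ and suppose the nonzero weights of $C$ are exactly $d,\ n/2,\ n-d,\ n$ (with $n$ even). If $d^\perp\ge 8$, then $$n^2-(4d+3)n+4d^2+8=0.$$
   Context: $\mathbf{1}_n$ is the all-ones vector; $C^\perp$ is the dual code with respect to the standard inner product; $d^\perp$ is the minimum nonzero weight of $C^\perp$; $C_u=\{c\in C:\mathrm{wt}(c)=u\}$ (Hamming weight). The paper notes that in the case $d^\perp-t=3$ the weight distribution of $C$ is supported on $0,d,n/2,n-d,n$ with $n$ even, and works under this assumption throughout. *)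

theory Defs
  imports Main
begin

text \<open>Vectors of F_2^n are represented by their supports, i.e. subsets of {..<n}.
  Vector addition is symmetric difference, the Hamming weight is the cardinality,
  the all-ones vector is {..<n}, and the standard inner product of x and y is
  the parity of card (x \<inter> y).\<close>

definition vadd :: "nat set \<Rightarrow> nat set \<Rightarrow> nat set" where
  "vadd x y = (x - y) \<union> (y - x)"

definition binary_linear_code :: "nat \<Rightarrow> nat \<Rightarrow> nat set set \<Rightarrow> bool" where
  "binary_linear_code n k C \<longleftrightarrow>
     C \<subseteq> Pow {..<n} \<and> {} \<in> C \<and> (\<forall>x\<in>C. \<forall>y\<in>C. vadd x y \<in> C) \<and> card C = 2 ^ k"

definition dual_code :: "nat \<Rightarrow> nat set set \<Rightarrow> nat set set" where
  "dual_code n C = {y. y \<subseteq> {..<n} \<and> (\<forall>x\<in>C. even (card (x \<inter> y)))}"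

definition min_distance :: "nat set set \<Rightarrow> nat \<Rightarrow> bool" where
  "min_distance C d \<longleftrightarrow>
     (\<exists>c\<in>C. c \<noteq> {} \<and> card c = d) \<and> (\<forall>c\<in>C. c \<noteq> {} \<longrightarrow> d \<le> card c)"

definition weight_class :: "nat set set \<Rightarrow> nat \<Rightarrow> nat set set" where
  "weight_class C u = {c\<in>C. card c = u}"

end

theory Submission imports Defs begin

definition sgat :: "nat set \<Rightarrow> nat \<Rightarrow> int" where
  "sgat c i = (if i \<in> c then -1 else 1)"

definition chi :: "nat list \<Rightarrow> nat set \<Rightarrow> int" where
  "chi is c = prod_list (map (sgat c) is)"

fun Sx :: "nat list \<Rightarrow> nat set" where
  "Sx [] = {}"
| "Sx (i # is) = vadd {i} (Sx is)"

lemma vadd_card: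
  assumes "finite A" "finite B"
  shows "card (vadd A B) + 2 * card (A \<inter> B) = card A + card B"
proof -
  have "card (vadd A B) = card (A - B) + card (B - A)"
    unfolding vadd_def by (rule card_Un_disjoint) (use assms in auto)
  moreover have "card (A - B) + card (A \<inter> B) = card A"
  proof -
    have "card (A \<inter> B) \<le> card A" using assms by (intro card_mono) auto
    moreover have "card (A - B) = card A - card (A \<inter> B)" using assms by (intro card_Diff_subset_Int) auto
    ultimately show ?thesis by simp
  qed
  moreover have "card (B - A) + card (A \<inter> B) = card B"
  proof -
    have "card (A \<inter> B) \<le> card B" using assms by (intro card_mono) auto
    moreover have "card (B - A) = card B - card (B \<inter> A)" using assms by (intro card_Diff_subset_Int) auto
    ultimately show ?thesis by (simp add: Int_commute)
  qed
  ultimately show ?thesis by simp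
qed

lemma Sx_sub: "Sx is \<subseteq> set is"
  by (induction "is") (auto simp: vadd_def)

lemma Sx_fin: "finite (Sx is)"
  by (rule finite_subset[OF Sx_sub finite_set])

lemma Sx_card: "card (Sx is) \<le> length is"
  using card_mono[OF finite_set Sx_sub] card_length by (rule le_trans)

lemma chi_Sx: "chi is c = (-1) ^ card (c \<inter> Sx is)"
proof (induction "is")
  case Nil
  then show ?case by (simp add: chi_def)
next
  case (Cons i "is")
  have e: "c \<inter> vadd {i} (Sx is) = vadd (c \<inter> {i}) (c \<inter> Sx is)"
    unfolding vadd_def by auto
  have f1: "finite (c \<inter> {i})" by simp
  have f2: "finite (c \<inter> Sx is)" using Sx_fin by simp
  define e2 where "e2 = card ((c \<inter> {i}) \<inter> (c \<inter> Sx is))"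
  have cc: "card (vadd (c \<inter> {i}) (c \<inter> Sx is)) + 2 * e2 = card (c \<inter> {i}) + card (c \<inter> Sx is)"
    unfolding e2_def by (rule vadd_card[OF f1 f2])
  have "(-1::int) ^ card (vadd (c \<inter> {i}) (c \<inter> Sx is))
      = (-1) ^ (card (vadd (c \<inter> {i}) (c \<inter> Sx is)) + 2 * e2)"
    by (simp add: power_add power_mult)
  also have "\<dots> = (-1) ^ card (c \<inter> {i}) * (-1) ^ card (c \<inter> Sx is)"
    by (simp only: cc power_add)
  also have "(-1::int) ^ card (c \<inter> {i}) = sgat c i"
    by (cases "i \<in> c") (auto simp: sgat_def)
  finally show ?case using Cons by (simp add: chi_def e)
qed

lemma vadd_vadd: "vadd a (vadd a c) = c"
  unfolding vadd_def by auto

lemma sgat_vadd: "sgat (vadd x y) i = sgat x i * sgat y i"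
  by (auto simp: sgat_def vadd_def)

lemma chi_mult: "chi is (vadd x y) = chi is x * chi is y"
  by (induction "is") (simp_all add: chi_def sgat_vadd mult_ac)

lemma chi_sum_zero:
  assumes fin: "finite C" and cl: "\<forall>x\<in>C. \<forall>y\<in>C. vadd x y \<in> C"
    and c0: "c0 \<in> C" and m: "chi is c0 = -1"
  shows "(\<Sum>c\<in>C. chi is c) = 0"
proof -
  have bij: "bij_betw (vadd c0) C C"
    by (rule bij_betw_byWitness[where f'="vadd c0"]) (use cl c0 vadd_vadd in auto)
  have "(\<Sum>c\<in>C. chi is c) = (\<Sum>c\<in>C. chi is (vadd c0 c))"
    using sum.reindex_bij_betw[OF bij, of "chi is"] by simp
  also have "\<dots> = - (\<Sum>c\<in>C. chi is c)"
    by (simp add: chi_mult m sum_negf)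
  finally show ?thesis by simp
qed

lemma pow_expand:
  fixes f :: "nat \<Rightarrow> int"
  shows "(\<Sum>i\<in>A. f i) ^ j = (\<Sum>is\<in>{is. set is \<subseteq> A \<and> length is = j}. prod_list (map f is))"
proof (induction j)
  case 0
  have "{is. set is \<subseteq> A \<and> length is = 0} = {[]}" by auto
  then show ?case by simp
next
  case (Suc j)
  let ?L = "{is. set is \<subseteq> A \<and> length is = j}"
  have inj: "inj_on (\<lambda>(xs, n). n#xs) (?L \<times> A)" by (auto simp: inj_on_def)
  have "(\<Sum>is\<in>{is. set is \<subseteq> A \<and> length is = Suc j}. prod_list (map f is))
     = (\<Sum>p\<in>?L \<times> A. prod_list (map f (snd p # fst p)))"
    unfolding lists_length_Suc_eq by (subst sum.reindex[OF inj]) (auto intro!: sum.cong)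
  also have "\<dots> = (\<Sum>xs\<in>?L. \<Sum>i\<in>A. f i * prod_list (map f xs))"
    by (simp add: sum.cartesian_product case_prod_beta)
  also have "\<dots> = (\<Sum>xs\<in>?L. (\<Sum>i\<in>A. f i) * prod_list (map f xs))"
    by (simp add: sum_distrib_right)
  also have "\<dots> = (\<Sum>i\<in>A. f i) * (\<Sum>i\<in>A. f i) ^ j"
    by (simp add: Suc sum_distrib_left)
  finally show ?case by simp
qed

lemma s_sum:
  assumes "c \<subseteq> {..<n}"
  shows "(\<Sum>i<n. sgat c i) = int n - 2 * int (card c)"
proof -
  have "(\<Sum>i<n. sgat c i) = (\<Sum>i\<in>{..<n}. 1 - 2 * (if i \<in> c then 1 else 0))"
    by (rule sum.cong) (auto simp: sgat_def)
  also have "\<dots> = int n - 2 * (\<Sum>i\<in>{..<n}. (if i \<in> c then 1 else 0))"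
    by (simp add: sum_subtractf sum_distrib_left)
  also have "(\<Sum>i\<in>{..<n}. (if i \<in> c then 1 else 0::int)) = int (card c)"
  proof -
    have "{..<n} \<inter> c = c" using assms by blast
    then show ?thesis by (simp add: sum.If_cases)
  qed
  finally show ?thesis .
qed


lemma moment:
  assumes fin: "finite C" and sub: "C \<subseteq> Pow {..<n}"
    and cl: "\<forall>x\<in>C. \<forall>y\<in>C. vadd x y \<in> C"
    and P: "\<forall>S. S \<subseteq> {..<n} \<and> S \<noteq> {} \<and> card S \<le> j \<longrightarrow> (\<exists>c\<in>C. odd (card (c \<inter> S)))"
  shows "(\<Sum>c\<in>C. (int n - 2 * int (card c)) ^ j)
     = int (card C) * int (card {is. set is \<subseteq> {..<n} \<and> length is = j \<and> Sx is = {}})"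
proof -
  let ?L = "{is. set is \<subseteq> {..<n} \<and> length is = j}"
  have finL: "finite ?L" by (rule finite_lists_length_eq) simp
  have "(\<Sum>c\<in>C. (int n - 2 * int (card c)) ^ j) = (\<Sum>c\<in>C. \<Sum>is\<in>?L. chi is c)"
  proof (rule sum.cong)
    fix c assume "c \<in> C"
    then have "c \<subseteq> {..<n}" using sub by auto
    then have "int n - 2 * int (card c) = (\<Sum>i<n. sgat c i)" using s_sum by simp
    then show "(int n - 2 * int (card c)) ^ j = (\<Sum>is\<in>?L. chi is c)"
      by (simp add: pow_expand chi_def)
  qed simp
  also have "\<dots> = (\<Sum>is\<in>?L. \<Sum>c\<in>C. chi is c)" by (rule sum.swap)
  also have "\<dots> = (\<Sum>is\<in>?L. if Sx is = {} then int (card C) else 0)"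
  proof (rule sum.cong)
    fix "is" assume isL: "is \<in> ?L"
    show "(\<Sum>c\<in>C. chi is c) = (if Sx is = {} then int (card C) else 0)"
    proof (cases "Sx is = {}")
      case True
      then show ?thesis by (simp add: chi_Sx)
    next
      case False
      have "Sx is \<subseteq> {..<n}" using Sx_sub isL by auto
      moreover have "card (Sx is) \<le> j" using Sx_card isL by auto
      ultimately obtain c0 where c0: "c0 \<in> C" "odd (card (c0 \<inter> Sx is))"
        using P False by blast
      then have "chi is c0 = -1" by (simp add: chi_Sx)
      then show ?thesis using chi_sum_zero[OF fin cl c0(1)] False by simp
    qed
  qed simp
  also have "\<dots> = (\<Sum>is\<in>{is\<in>?L. Sx is = {}}. int (card C))"
    by (rule sum.inter_filter[OF finL, symmetric])
  also have "\<dots> = int (card C) * int (card {is. set is \<subseteq> {..<n} \<and> length is = j \<and> Sx is = {}})"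
  proof -
    have "{is\<in>?L. Sx is = {}} = {is. set is \<subseteq> {..<n} \<and> length is = j \<and> Sx is = {}}" by auto
    then show ?thesis by (simp add: mult.commute)
  qed
  finally show ?thesis .
qed

definition gg :: "nat \<Rightarrow> nat \<Rightarrow> int" where
  "gg n j = (\<Sum>x\<in>Pow {..<n}. (int n - 2 * int (card x)) ^ j)"

lemma gg_Suc:
  "gg (Suc n) j = (\<Sum>x\<in>Pow {..<n}. (int n - 2 * int (card x) + 1) ^ j + (int n - 2 * int (card x) - 1) ^ j)"
proof -
  have P: "Pow {..<Suc n} = Pow {..<n} \<union> insert n ` Pow {..<n}"
    by (simp add: lessThan_Suc Pow_insert)
  have inj: "inj_on (insert n) (Pow {..<n})"
    by (rule inj_onI) (metis Pow_iff insert_ident lessThan_iff order_less_irrefl subsetD)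
  have disj: "Pow {..<n} \<inter> insert n ` Pow {..<n} = {}" by auto
  have "gg (Suc n) j = (\<Sum>x\<in>Pow {..<n}. (int (Suc n) - 2 * int (card x)) ^ j)
      + (\<Sum>x\<in>insert n ` Pow {..<n}. (int (Suc n) - 2 * int (card x)) ^ j)"
    unfolding gg_def P by (rule sum.union_disjoint) (use disj in auto)
  also have "(\<Sum>x\<in>insert n ` Pow {..<n}. (int (Suc n) - 2 * int (card x)) ^ j)
     = (\<Sum>x\<in>Pow {..<n}. (int (Suc n) - 2 * int (card (insert n x))) ^ j)"
    by (rule sum.reindex[OF inj, unfolded comp_def])
  also have "\<dots> = (\<Sum>x\<in>Pow {..<n}. (int n - 2 * int (card x) - 1) ^ j)"
  proof (rule sum.cong)
    fix x assume "x \<in> Pow {..<n}"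
    then have "finite x" "n \<notin> x" by (auto intro: finite_subset)
    then show "(int (Suc n) - 2 * int (card (insert n x))) ^ j = (int n - 2 * int (card x) - 1) ^ j"
      by simp
  qed simp
  also have "(\<Sum>x\<in>Pow {..<n}. (int (Suc n) - 2 * int (card x)) ^ j)
     = (\<Sum>x\<in>Pow {..<n}. (int n - 2 * int (card x) + 1) ^ j)"
    by (rule sum.cong) (simp_all add: algebra_simps)
  finally show ?thesis by (simp add: sum.distrib)
qed

lemma gg0: "gg n 0 = 2 ^ n"
  by (simp add: gg_def card_Pow)

lemma gg2: "gg n 2 = 2 ^ n * int n"
proof (induction n)
  case 0 then show ?case by (simp add: gg_def)
next
  case (Suc n)
  have "gg (Suc n) 2 = (\<Sum>x\<in>Pow {..<n}. 2 * (int n - 2 * int (card x)) ^ 2 + 2)"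
    unfolding gg_Suc by (rule sum.cong) (simp_all add: power2_eq_square algebra_simps)
  also have "\<dots> = 2 * gg n 2 + 2 * gg n 0"
    by (simp add: sum.distrib sum_distrib_left gg_def)
  finally show ?case using Suc gg0 by (simp add: algebra_simps)
qed

lemma gg4: "gg n 4 = 2 ^ n * (3 * int n ^ 2 - 2 * int n)"
proof (induction n)
  case 0 then show ?case by (simp add: gg_def)
next
  case (Suc n)
  have "gg (Suc n) 4 = (\<Sum>x\<in>Pow {..<n}. 2 * (int n - 2 * int (card x)) ^ 4 + 12 * (int n - 2 * int (card x)) ^ 2 + 2)"
    unfolding gg_Suc by (rule sum.cong) (simp_all add: power2_eq_square power4_eq_xxxx algebra_simps)
  also have "\<dots> = 2 * gg n 4 + 12 * gg n 2 + 2 * gg n 0"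
    by (simp add: sum.distrib sum_distrib_left gg_def)
  finally show ?case using Suc gg0 gg2 by (simp add: algebra_simps power2_eq_square)
qed

lemma gg6: "gg n 6 = 2 ^ n * (15 * int n ^ 3 - 30 * int n ^ 2 + 16 * int n)"
proof (induction n)
  case 0 then show ?case by (simp add: gg_def)
next
  case (Suc n)
  have "gg (Suc n) 6 = (\<Sum>x\<in>Pow {..<n}. 2 * (int n - 2 * int (card x)) ^ 6 + 30 * (int n - 2 * int (card x)) ^ 4 + 30 * (int n - 2 * int (card x)) ^ 2 + 2)"
    unfolding gg_Suc by (rule sum.cong) (simp_all add: eval_nat_numeral algebra_simps)
  also have "\<dots> = 2 * gg n 6 + 30 * gg n 4 + 30 * gg n 2 + 2 * gg n 0"
    by (simp add: sum.distrib sum_distrib_left gg_def)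
  also have "\<dots> = 2 ^ n * (2 * (15 * int n ^ 3 - 30 * int n ^ 2 + 16 * int n) + 30 * (3 * int n ^ 2 - 2 * int n) + 30 * int n + 2)"
    by (simp only: Suc.IH gg4 gg2 gg0) (simp add: algebra_simps)
  also have "\<dots> = 2 ^ Suc n * (15 * int (Suc n) ^ 3 - 30 * int (Suc n) ^ 2 + 16 * int (Suc n))"
    by (simp add: power2_eq_square power3_eq_cube algebra_simps)
  finally show ?case .
qed

lemma E_eq:
  assumes "gg n j = 2 ^ n * v"
  shows "int (card {is. set is \<subseteq> {..<n} \<and> length is = j \<and> Sx is = {}}) = v"
proof -
  have fin: "finite (Pow {..<n})" by simp
  have cl: "\<forall>x\<in>Pow {..<n}. \<forall>y\<in>Pow {..<n}. vadd x y \<in> Pow {..<n}"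
    by (auto simp: vadd_def)
  have P: "\<forall>S. S \<subseteq> {..<n} \<and> S \<noteq> {} \<and> card S \<le> j \<longrightarrow> (\<exists>c\<in>Pow {..<n}. odd (card (c \<inter> S)))"
  proof (intro allI impI)
    fix S :: "nat set" assume h: "S \<subseteq> {..<n} \<and> S \<noteq> {} \<and> card S \<le> j"
    then obtain i where "i \<in> S" by blast
    then have "{i} \<in> Pow {..<n}" "{i} \<inter> S = {i}" using h by auto
    then show "\<exists>c\<in>Pow {..<n}. odd (card (c \<inter> S))" by (intro bexI[of _ "{i}"]) simp_all
  qed
  have "gg n j = int (card (Pow {..<n})) * int (card {is. set is \<subseteq> {..<n} \<and> length is = j \<and> Sx is = {}})"
    unfolding gg_def by (rule moment[OF fin _ cl P]) simp
  then show ?thesis using assms by (simp add: card_Pow)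
qed


theorem proposition4p1:
  fixes n k d dperp t :: nat and C :: "nat set set"
  assumes code: "binary_linear_code n k C"
    and mind: "min_distance C d"
    and ones: "{..<n} \<in> C"
    and dmind: "min_distance (dual_code n C) dperp"
    and tpos: "0 < t"
    and h1: "int dperp - int t = 3"
    and h2: "card {u. weight_class C u \<noteq> {} \<and> 0 < u \<and> u \<le> n - t} = 3"
    and neven: "even n"
    and wts: "{card c | c. c \<in> C \<and> c \<noteq> {}} = {d, n div 2, n - d, n}"
    and big: "dperp \<ge> 8"
  shows "(int n)^2 - (4 * int d + 3) * int n + 4 * (int d)^2 + 8 = 0"
proof -
  have sub: "C \<subseteq> Pow {..<n}" and cl: "\<forall>x\<in>C. \<forall>y\<in>C. vadd x y \<in> C"
    and cardC: "card C = 2 ^ k"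
    using code by (auto simp: binary_linear_code_def)
  have fin: "finite C" using sub finite_subset by (metis finite_Pow_iff finite_lessThan)
  have Npos: "card C > 0" using cardC by simp
  have n3: "3 \<le> n"
  proof -
    have "{u. weight_class C u \<noteq> {} \<and> 0 < u \<and> u \<le> n - t} \<subseteq> {1..n}" by auto
    from card_mono[OF _ this] h2 show ?thesis by simp
  qed
  have dn: "d \<le> n"
  proof -
    obtain c where "c \<in> C" "card c = d" using mind by (auto simp: min_distance_def)
    then have "c \<subseteq> {..<n}" using sub by auto
    then have "card c \<le> n" using card_mono[of "{..<n}" c] by simp
    then show ?thesis using \<open>card c = d\<close> by simp
  qed
  have P: "\<forall>S. S \<subseteq> {..<n} \<and> S \<noteq> {} \<and> card S \<le> j \<longrightarrow> (\<exists>c\<in>C. odd (card (c \<inter> S)))"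
    if j6: "j \<le> 6" for j
  proof (intro allI impI)
    fix S :: "nat set" assume h: "S \<subseteq> {..<n} \<and> S \<noteq> {} \<and> card S \<le> j"
    show "\<exists>c\<in>C. odd (card (c \<inter> S))"
    proof (rule ccontr)
      assume "\<not> (\<exists>c\<in>C. odd (card (c \<inter> S)))"
      then have "S \<in> dual_code n C" using h by (auto simp: dual_code_def)
      then have "dperp \<le> card S" using dmind h by (auto simp: min_distance_def)
      then show False using h j6 big by simp
    qed
  qed
  define s where "s c = int n - 2 * int (card c)" for c :: "nat set"
  define X where "X = (int n - 2 * int d) ^ 2"
  define N where "N = int (card C)"
  have m2: "(\<Sum>c\<in>C. s c ^ 2) = N * int n"
    unfolding s_def N_def using moment[OF fin sub cl P[of 2]] E_eq[OF gg2] by simp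
  have m4: "(\<Sum>c\<in>C. s c ^ 4) = N * (3 * int n ^ 2 - 2 * int n)"
    unfolding s_def N_def using moment[OF fin sub cl P[of 4]] E_eq[OF gg4] by simp
  have m6: "(\<Sum>c\<in>C. s c ^ 6) = N * (15 * int n ^ 3 - 30 * int n ^ 2 + 16 * int n)"
    unfolding s_def N_def using moment[OF fin sub cl P[of 6]] E_eq[OF gg6] by simp
  have pt: "s c ^ 6 - (int n ^ 2 + X) * s c ^ 4 + int n ^ 2 * X * s c ^ 2 = 0" if cC: "c \<in> C" for c
  proof -
    have fact: "s c ^ 6 - (int n ^ 2 + X) * s c ^ 4 + int n ^ 2 * X * s c ^ 2
      = s c ^ 2 * (s c ^ 2 - int n ^ 2) * (s c ^ 2 - X)"
      by (simp add: algebra_simps eval_nat_numeral)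
    have cases: "card c = 0 \<or> card c = d \<or> card c = n div 2 \<or> card c = n - d \<or> card c = n"
    proof (cases "c = {}")
      case True then show ?thesis by simp
    next
      case False
      then have "card c \<in> {card c | c. c \<in> C \<and> c \<noteq> {}}" using cC by blast
      then show ?thesis using wts by auto
    qed
    have "s c ^ 2 = int n ^ 2 \<or> s c ^ 2 = X \<or> s c = 0"
    proof -
      have i2: "int (n div 2) * 2 = int n" using neven by auto
      have i3: "int (n - d) = int n - int d" using dn by simp
      show ?thesis using cases
      proof (elim disjE)
        assume "card c = 0" then show ?thesis by (simp add: s_def)
      next
        assume "card c = d" then show ?thesis by (simp add: s_def X_def)
      next
        assume "card c = n div 2" then show ?thesis using i2 by (simp add: s_def)
      next
        assume "card c = n - d"
        then have "s c = - (int n - 2 * int d)" using i3 by (simp add: s_def)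
        then have "s c ^ 2 = X" unfolding X_def by (metis power2_minus)
        then show ?thesis by simp
      next
        assume "card c = n"
        then have "s c = - int n" by (simp add: s_def)
        then show ?thesis by simp
      qed
    qed
    then show ?thesis unfolding fact by auto
  qed
  have "0 = (\<Sum>c\<in>C. s c ^ 6 - (int n ^ 2 + X) * s c ^ 4 + int n ^ 2 * X * s c ^ 2)"
    using pt by simp
  also have "\<dots> = (\<Sum>c\<in>C. s c ^ 6) - (int n ^ 2 + X) * (\<Sum>c\<in>C. s c ^ 4) + int n ^ 2 * X * (\<Sum>c\<in>C. s c ^ 2)"
    by (simp add: sum.distrib sum_subtractf sum_distrib_left)
  also have "\<dots> = N * (int n * (int n - 1) * (int n - 2) * (X - 3 * int n + 8))"
    unfolding m2 m4 m6 by (simp add: algebra_simps eval_nat_numeral)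
  finally have eq: "N * (int n * (int n - 1) * (int n - 2) * (X - 3 * int n + 8)) = 0" by simp
  have "N \<noteq> 0" using Npos N_def by simp
  moreover have "int n * (int n - 1) * (int n - 2) \<noteq> 0" using n3 by simp
  ultimately have "X - 3 * int n + 8 = 0" using eq by simp
  then show ?thesis unfolding X_def by (simp add: algebra_simps power2_eq_square)
qed

end
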